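(* Let $P_k$ be a real symmetric positive semidefinite $n\times n$ matrix, $\tilde P_k\in\mathcal S_n$, and $\hat\Delta_k$ a real symmetric $n\times n$ matrix with nonnegative entries such that $|\tilde P_k-P_k|\leq\hat\Delta_k$ entrywise. Let $S^*_k$ be an optimal solution of $$\min_{S\in\mathcal S_n}\ \operatorname{tr}(\tilde P_k+S)\quad\text{subject to}\quad [S]_{ii}\geq\sum_{j=1}^n[\hat\Delta_k]_{ij}+\sum_{j=1,\,j\neq i}^n|[S]_{ij}|,\ \ i=1,\ldots,n,$$ and set $\hat P_k=\tilde P_k+S_k^*$. Then for every $W\in\{0,1\}^{n\times n}$, $$\|W\odot(\hat P_k-P_k)\|_F\leq\|W\odot(\operatorname{diag}(\hat\Delta_k\mathbf 1)+\hat\Delta_k)\|_F.$$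
   Context: $\mathcal S_n$ denotes the set of real symmetric $n\times n$ matrices; $|M|$ is the entrywise absolute value and $\leq$ between matrices is entrywise; $\odot$ is the entrywise (Hadamard) product; $\|\cdot\|_F$ is the Frobenius norm; $\mathbf 1$ is the all-ones vector; $\operatorname{diag}(v)$ is the diagonal matrix with diagonal $v$. *)

theory Defs
  imports "HOL-Analysis.Analysis"
begin

definition sym_mat :: "real^'n^'n \<Rightarrow> bool" where
  "sym_mat A \<longleftrightarrow> transpose A = A"

definition psd_mat :: "real^'n^'n \<Rightarrow> bool" where
  "psd_mat A \<longleftrightarrow> sym_mat A \<and> (\<forall>x::real^'n. 0 \<le> x \<bullet> (A *v x))"

definition mat_abs :: "real^'n^'m \<Rightarrow> real^'n^'m" where
  "mat_abs A = (\<chi> i j. \<bar>A $ i $ j\<bar>)"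

definition mat_le :: "real^'n^'m \<Rightarrow> real^'n^'m \<Rightarrow> bool" where
  "mat_le A B \<longleftrightarrow> (\<forall>i j. A $ i $ j \<le> B $ i $ j)"

definition hadamard :: "real^'n^'m \<Rightarrow> real^'n^'m \<Rightarrow> real^'n^'m" where
  "hadamard A B = (\<chi> i j. A $ i $ j * B $ i $ j)"

definition frob_norm :: "real^'n^'m \<Rightarrow> real" where
  "frob_norm A = sqrt (\<Sum>i\<in>UNIV. \<Sum>j\<in>UNIV. (A $ i $ j)\<^sup>2)"

definition diag_mat :: "real^'n \<Rightarrow> real^'n^'n" where
  "diag_mat v = (\<chi> i j. if i = j then v $ i else 0)"

definition feasible_S :: "real^'n^'n \<Rightarrow> real^'n^'n \<Rightarrow> bool" where
  "feasible_S Delta S \<longleftrightarrow> sym_mat S \<and>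
     (\<forall>i. S $ i $ i \<ge> (\<Sum>j\<in>UNIV. Delta $ i $ j) + (\<Sum>j\<in>UNIV - {i}. \<bar>S $ i $ j\<bar>))"

definition optimal_S :: "real^'n^'n \<Rightarrow> real^'n^'n \<Rightarrow> real^'n^'n \<Rightarrow> bool" where
  "optimal_S Pt Delta S \<longleftrightarrow> feasible_S Delta S \<and>
     (\<forall>S'. feasible_S Delta S' \<longrightarrow> trace (Pt + S) \<le> trace (Pt + S'))"

end

theory Submission
  imports Defs
begin

lemma frob_mono:
  fixes A B :: "real^'n^'m"
  assumes "\<And>i j. \<bar>A $ i $ j\<bar> \<le> \<bar>B $ i $ j\<bar>"
  shows "frob_norm A \<le> frob_norm B"
  unfolding frob_norm_def
  by (intro real_sqrt_le_mono sum_mono) (simp add: abs_le_square_iff[symmetric] assms)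

theorem mainTheorem4:
  fixes P Pt Delta S W :: "real^'n^'n"
  assumes "psd_mat P"
    and "sym_mat Pt"
    and "sym_mat Delta"
    and "\<forall>i j. 0 \<le> Delta $ i $ j"
    and "mat_le (mat_abs (Pt - P)) Delta"
    and "optimal_S Pt Delta S"
    and "\<forall>i j. W $ i $ j \<in> {0, 1}"
  shows "frob_norm (hadamard W ((Pt + S) - P))
           \<le> frob_norm (hadamard W (diag_mat (Delta *v (\<chi> i. 1)) + Delta))"
proof -
  define r where "r i = (\<Sum>j\<in>UNIV. Delta $ i $ j)" for i
  define o' where "o' i = (\<Sum>j\<in>UNIV - {i}. \<bar>S $ i $ j\<bar>)" for i
  define S0 where "S0 = diag_mat (Delta *v (\<chi> i. 1))"
  have S0e: "S0 $ i $ j = (if i = j then r i else 0)" for i j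
    by (simp add: S0_def diag_mat_def matrix_vector_mult_def r_def)
  have rnn: "r i \<ge> 0" for i unfolding r_def using assms(4) by (simp add: sum_nonneg)
  have onn: "o' i \<ge> 0" for i unfolding o'_def by (simp add: sum_nonneg)
  have fS: "S $ i $ i \<ge> r i + o' i" for i
    using assms(6) unfolding optimal_S_def feasible_S_def r_def o'_def by blast
  have feas0: "feasible_S Delta S0"
    unfolding feasible_S_def sym_mat_def
  proof
    show "transpose S0 = S0" by (simp add: vec_eq_iff transpose_def S0e)
    show "\<forall>i. (\<Sum>j\<in>UNIV. Delta $ i $ j) + (\<Sum>j\<in>UNIV - {i}. \<bar>S0 $ i $ j\<bar>) \<le> S0 $ i $ i"
      by (simp add: S0e r_def)
  qed
  have "trace (Pt + S) \<le> trace (Pt + S0)"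
    using assms(6) feas0 unfolding optimal_S_def by blast
  hence tr: "(\<Sum>i\<in>UNIV. S $ i $ i) \<le> (\<Sum>i\<in>UNIV. r i)"
    by (simp add: trace_add trace_def S0e sum.distrib)
  have "(\<Sum>i\<in>UNIV. r i + o' i) \<le> (\<Sum>i\<in>UNIV. S $ i $ i)"
    by (rule sum_mono) (use fS in auto)
  hence "(\<Sum>i\<in>UNIV. o' i) \<le> 0" using tr by (simp add: sum.distrib)
  moreover have "(\<Sum>i\<in>UNIV. o' i) \<ge> 0" using onn by (simp add: sum_nonneg)
  ultimately have "(\<Sum>i\<in>UNIV. o' i) = 0" by linarith
  hence o0: "o' i = 0" for i
    using sum_nonneg_eq_0_iff[of UNIV o'] onn by simp
  have offd: "S $ i $ j = 0" if "i \<noteq> j" for i j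
  proof -
    have "\<forall>k\<in>UNIV - {i}. \<bar>S $ i $ k\<bar> = 0"
      using o0[of i] unfolding o'_def by (subst (asm) sum_nonneg_eq_0_iff) auto
    thus ?thesis using that by auto
  qed
  have "(\<Sum>i\<in>UNIV. S $ i $ i - r i) \<le> 0" using tr by (simp add: sum_subtractf)
  moreover have nn: "\<forall>i\<in>UNIV. S $ i $ i - r i \<ge> 0" using fS onn by (smt (verit))
  moreover have "(\<Sum>i\<in>UNIV. S $ i $ i - r i) \<ge> 0" using nn by (simp add: sum_nonneg)
  ultimately have "(\<Sum>i\<in>UNIV. S $ i $ i - r i) = 0" by linarith
  hence "\<forall>i\<in>UNIV. S $ i $ i - r i = 0"
    using sum_nonneg_eq_0_iff[of UNIV "\<lambda>i. S $ i $ i - r i"] nn by simp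
  hence SS0: "S $ i $ j = S0 $ i $ j" for i j
    using offd S0e by (cases "i = j") auto
  show ?thesis
    unfolding S0_def[symmetric]
  proof (rule frob_mono)
    fix i j
    have d: "\<bar>Pt $ i $ j - P $ i $ j\<bar> \<le> Delta $ i $ j"
      using assms(5) by (simp add: mat_le_def mat_abs_def)
    have "\<bar>Pt $ i $ j + S0 $ i $ j - P $ i $ j\<bar> \<le> \<bar>S0 $ i $ j + Delta $ i $ j\<bar>"
      using d rnn[of i] assms(4) S0e[of i j] by (smt (verit))
    moreover have "W $ i $ j = 0 \<or> W $ i $ j = 1" using assms(7) by auto
    ultimately show "\<bar>hadamard W (Pt + S - P) $ i $ j\<bar> \<le> \<bar>hadamard W (S0 + Delta) $ i $ j\<bar>"
      by (auto simp: hadamard_def SS0)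
  qed
qed

end
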